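(* There exist universal constants $c_1,c_2,c_3,c_4>0$ and $n_0$ such that for all $n\ge n_0$ and all integers $k$ with $2\le k\le n$, there is a unit-weight graph with at most $n$ vertices on which simultaneously: $c_1k\le\mathsf{OPT}\le c_2k$; $\mathsf{OPT}^{\mathsf{stable}}\ge c_3 n$; and every persuasive signaling scheme (with any finite signal space) has cost at least $c_4\min\{k\sqrt{n},\,n\}$.
   Context: Setting. For a graph on vertex set $V$ with $N=|V|$ vertices, $W$ is a symmetric $\{0,1\}$ matrix with $W_{v,v}=1$ and $W_{u,v}=1$ iff $u,v$ are adjacent (unit-weight graph). A vector $\theta\in\mathbb{R}_{\ge0}^V$ is feasible if $W\theta\ge\mathbf 1$ coordinatewise, and stable if it is feasible and for every $v$, $\theta_v=\min\{x\ge0: x+\sum_{v'\neq v}W_{v,v'}\theta_{v'}\ge1\}$. $\mathsf{OPT}=\min\{\|\theta\|_1:\theta\ge0\text{ feasible}\}$ and $\mathsf{OPT}^{\mathsf{stable}}=\min\{\|\theta\|_1:\theta\text{ stable}\}$. Signaling. There are $N$ agents; the type profile $t$ is a uniformly random bijection $[N]\to V$. A signaling scheme with finite signal space $\Sigma\subset[0,1]$ is a map $\varphi$ assigning to each bijection $t$ a distribution $\varphi(t)$ on $\Sigma^V$; given $t$, $s\sim\varphi(t)$ is drawn and agent $i$ privately receives $s_{t_i}$. For agent $i$, a signal $\theta\in\Sigma$ with $\Pr[s_{t_i}=\theta]>0$ and $x\ge0$, let $Q_i(x\mid\theta)=\mathbb{E}\big[x+\sum_{v'\neq t_i}W_{t_i,v'}s_{v'}\,\big|\,s_{t_i}=\theta\big]$.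 The scheme is persuasive if for every agent $i$ and every such $\theta$: $Q_i(\theta\mid\theta)\ge1$ and $\theta=\min\{x\ge0:Q_i(x\mid\theta)\ge1\}$. Its cost is $\mathbb{E}[\|s\|_1]$. *)

theory Defs
  imports "HOL-Probability.Probability" "HOL-Combinatorics.Permutations"
begin

definition is_min :: "(real \<Rightarrow> bool) \<Rightarrow> real \<Rightarrow> bool" where
  "is_min P x \<longleftrightarrow> P x \<and> (\<forall>y. P y \<longrightarrow> x \<le> y)"

definition unit_graph :: "nat \<Rightarrow> (nat \<Rightarrow> nat \<Rightarrow> bool) \<Rightarrow> bool" where
  "unit_graph N E \<longleftrightarrow>
     (\<forall>u v. E u v \<longrightarrow> u < N \<and> v < N) \<and>
     (\<forall>u v. E u v \<longrightarrow> E v u) \<and> (\<forall>v. \<not> E v v)"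

definition Wm :: "(nat \<Rightarrow> nat \<Rightarrow> bool) \<Rightarrow> nat \<Rightarrow> nat \<Rightarrow> real" where
  "Wm E u v = (if u = v \<or> E u v then 1 else 0)"

definition feasible :: "nat \<Rightarrow> (nat \<Rightarrow> nat \<Rightarrow> bool) \<Rightarrow> (nat \<Rightarrow> real) \<Rightarrow> bool" where
  "feasible N E \<theta> \<longleftrightarrow> (\<forall>v<N. \<theta> v \<ge> 0) \<and>
     (\<forall>v<N. (\<Sum>u<N. Wm E v u * \<theta> u) \<ge> 1)"

definition stable :: "nat \<Rightarrow> (nat \<Rightarrow> nat \<Rightarrow> bool) \<Rightarrow> (nat \<Rightarrow> real) \<Rightarrow> bool" where
  "stable N E \<theta> \<longleftrightarrow> feasible N E \<theta> \<and>
     (\<forall>v<N. is_min (\<lambda>x. x \<ge> 0 \<and> x + (\<Sum>u\<in>{..<N}-{v}. Wm E v u * \<theta> u) \<ge> 1) (\<theta> v))"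
  for N E \<theta>

definition OPT :: "nat \<Rightarrow> (nat \<Rightarrow> nat \<Rightarrow> bool) \<Rightarrow> real" where
  "OPT N E = Inf {(\<Sum>v<N. \<bar>\<theta> v\<bar>) | \<theta>. feasible N E \<theta>}"

definition OPT_stable :: "nat \<Rightarrow> (nat \<Rightarrow> nat \<Rightarrow> bool) \<Rightarrow> real" where
  "OPT_stable N E = Inf {(\<Sum>v<N. \<bar>\<theta> v\<bar>) | \<theta>. stable N E \<theta>}"

text \<open>Type profiles: bijections [N] -> V, i.e. permutations of {0..<N}.\<close>
definition profiles :: "nat \<Rightarrow> (nat \<Rightarrow> nat) set" where
  "profiles N = {t. t permutes {..<N}}"

definition scheme :: "nat \<Rightarrow> real set \<Rightarrow> ((nat \<Rightarrow> nat) \<Rightarrow> (nat \<Rightarrow> real) pmf) \<Rightarrow> bool" where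
  "scheme N Sig \<phi> \<longleftrightarrow> finite Sig \<and> Sig \<subseteq> {0..1} \<and>
     (\<forall>t\<in>profiles N. set_pmf (\<phi> t) \<subseteq> {s. (\<forall>v<N. s v \<in> Sig) \<and> (\<forall>v. v \<ge> N \<longrightarrow> s v = 0)})"

definition joint :: "nat \<Rightarrow> ((nat \<Rightarrow> nat) \<Rightarrow> (nat \<Rightarrow> real) pmf) \<Rightarrow> ((nat \<Rightarrow> nat) \<times> (nat \<Rightarrow> real)) pmf" where
  "joint N \<phi> = do { t \<leftarrow> pmf_of_set (profiles N); s \<leftarrow> \<phi> t; return_pmf (t, s) }"

definition sig_event :: "nat \<Rightarrow> real \<Rightarrow> ((nat \<Rightarrow> nat) \<times> (nat \<Rightarrow> real)) set" where
  "sig_event i \<theta> = {(t, s). s (t i) = \<theta>}"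

definition Qf :: "nat \<Rightarrow> (nat \<Rightarrow> nat \<Rightarrow> bool) \<Rightarrow> ((nat \<Rightarrow> nat) \<Rightarrow> (nat \<Rightarrow> real) pmf)
                   \<Rightarrow> nat \<Rightarrow> real \<Rightarrow> real \<Rightarrow> real" where
  "Qf N E \<phi> i x \<theta> =
     measure_pmf.expectation (cond_pmf (joint N \<phi>) (sig_event i \<theta>))
       (\<lambda>(t, s). x + (\<Sum>v'\<in>{..<N}-{t i}. Wm E (t i) v' * s v'))"

definition persuasive :: "nat \<Rightarrow> (nat \<Rightarrow> nat \<Rightarrow> bool) \<Rightarrow> real set
                           \<Rightarrow> ((nat \<Rightarrow> nat) \<Rightarrow> (nat \<Rightarrow> real) pmf) \<Rightarrow> bool" where
  "persuasive N E Sig \<phi> \<longleftrightarrow>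
     (\<forall>i<N. \<forall>\<theta>\<in>Sig. measure_pmf.prob (joint N \<phi>) (sig_event i \<theta>) > 0 \<longrightarrow>
        Qf N E \<phi> i \<theta> \<theta> \<ge> 1 \<and> is_min (\<lambda>x. x \<ge> 0 \<and> Qf N E \<phi> i x \<theta> \<ge> 1) \<theta>)"

definition cost :: "nat \<Rightarrow> ((nat \<Rightarrow> nat) \<Rightarrow> (nat \<Rightarrow> real) pmf) \<Rightarrow> real" where
  "cost N \<phi> = measure_pmf.expectation (joint N \<phi>) (\<lambda>(t, s). \<Sum>v<N. \<bar>s v\<bar>)"

end

theory Submission
  imports Defs
begin


definition Yv :: "nat \<Rightarrow> (nat \<Rightarrow> nat \<Rightarrow> bool) \<Rightarrow> nat \<Rightarrow> (nat \<Rightarrow> real) \<Rightarrow> real" where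
  "Yv N E v s = (\<Sum>u\<in>{..<N}-{v}. Wm E v u * s u)"

definition sigvecs :: "nat \<Rightarrow> real set \<Rightarrow> (nat \<Rightarrow> real) set" where
  "sigvecs N Sig = {s. (\<forall>v<N. s v \<in> Sig) \<and> (\<forall>v. v \<ge> N \<longrightarrow> s v = 0)}"

lemma finite_sigvecs: assumes "finite Sig" shows "finite (sigvecs N Sig)"
proof -
  let ?f = "\<lambda>g v. if v < N then g v else (0::real)"
  have "sigvecs N Sig \<subseteq> ?f ` (PiE {..<N} (\<lambda>_. Sig))"
  proof
    fix s assume s: "s \<in> sigvecs N Sig"
    have "s = ?f (restrict s {..<N})" using s by (auto simp: sigvecs_def)
    moreover have "restrict s {..<N} \<in> PiE {..<N} (\<lambda>_. Sig)" using s by (auto simp: sigvecs_def)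
    ultimately show "s \<in> ?f ` (PiE {..<N} (\<lambda>_. Sig))" by blast
  qed
  moreover have "finite (PiE {..<N} (\<lambda>_. Sig))" using assms by (intro finite_PiE) auto
  ultimately show ?thesis using finite_subset by blast
qed

lemma finite_profiles: "finite (profiles N)"
  unfolding profiles_def by (rule finite_permutations) simp

lemma profiles_ne: "profiles N \<noteq> {}"
  unfolding profiles_def using permutes_id by blast

lemma set_joint: assumes "scheme N Sig \<phi>"
  shows "set_pmf (joint N \<phi>) \<subseteq> profiles N \<times> sigvecs N Sig"
proof
  fix a assume a: "a \<in> set_pmf (joint N \<phi>)"
  then obtain t s where ts: "t \<in> profiles N" "s \<in> set_pmf (\<phi> t)" "a = (t, s)"
    using finite_profiles[of N] profiles_ne[of N] by (auto simp: joint_def)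
  then show "a \<in> profiles N \<times> sigvecs N Sig" using assms
    unfolding scheme_def sigvecs_def by blast
qed

lemma finite_joint: assumes "scheme N Sig \<phi>" shows "finite (set_pmf (joint N \<phi>))"
  using set_joint[OF assms] finite_sigvecs finite_profiles assms
  by (meson finite_SigmaI finite_subset scheme_def)

lemma sig_event_iff: "a \<in> sig_event i \<theta> \<longleftrightarrow> snd a (fst a i) = \<theta>"
  by (cases a) (auto simp: sig_event_def)

lemma agent_nonneg:
  assumes sch: "scheme N Sig \<phi>" and pers: "persuasive N E Sig \<phi>" and i: "i < N" and a0: "\<alpha> 0 \<ge> 0"
  shows "measure_pmf.expectation (joint N \<phi>) (\<lambda>(t,s). \<alpha> (s (t i)) * (s (t i) + Yv N E (t i) s - 1)) \<ge> 0"
proof -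
  define J where "J = joint N \<phi>"
  define D where "D = set_pmf J"
  define val where "val = (\<lambda>a::(nat\<Rightarrow>nat)\<times>(nat\<Rightarrow>real). snd a (fst a i))"
  define Y where "Y = (\<lambda>a::(nat\<Rightarrow>nat)\<times>(nat\<Rightarrow>real). Yv N E (fst a i) (snd a))"
  define g where "g = (\<lambda>(t,s). \<alpha> (s (t i)) * (s (t i) + Yv N E (t i) s - 1))"
  have g_alt: "g a = \<alpha> (val a) * (val a + Y a - 1)" for a
    by (cases a) (simp add: g_def val_def Y_def)
  have finD: "finite D" using finite_joint[OF sch] by (simp add: D_def J_def)
  have valSig: "val a \<in> Sig" if "a \<in> D" for a
  proof -
    obtain t s where a: "a = (t,s)" by (cases a)
    have "t \<in> profiles N" "s \<in> sigvecs N Sig" using set_joint[OF sch] that a by (auto simp: D_def J_def)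
    then have "t i < N" "\<forall>v<N. s v \<in> Sig" using i permutes_in_image[of t "{..<N}" i]
      by (auto simp: profiles_def sigvecs_def)
    then show ?thesis by (simp add: a val_def)
  qed
  have Sig01: "Sig \<subseteq> {0..1}" using sch by (simp add: scheme_def)
  have "measure_pmf.expectation J g = (\<Sum>a\<in>D. g a * pmf J a)"
    by (rule integral_measure_pmf_real) (use finD in \<open>auto simp: D_def\<close>)
  also have "\<dots> = (\<Sum>\<theta>\<in>val ` D. \<Sum>a\<in>{a\<in>D. val a = \<theta>}. g a * pmf J a)"
    using finD by (rule sum.image_gen)
  also have "\<dots> \<ge> 0"
  proof (rule sum_nonneg)
    fix \<theta> assume th: "\<theta> \<in> val ` D"
    define D\<theta> where "D\<theta> = {a\<in>D. val a = \<theta>}"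
    have D\<theta>_eq: "D\<theta> = D \<inter> sig_event i \<theta>" by (auto simp: D\<theta>_def sig_event_iff val_def)
    have fin\<theta>: "finite D\<theta>" using finD by (simp add: D\<theta>_def)
    have ne: "set_pmf J \<inter> sig_event i \<theta> \<noteq> {}" using th by (auto simp: D_def sig_event_iff val_def)
    have thSig: "\<theta> \<in> Sig" using th valSig by auto
    define P where "P = measure_pmf.prob J (sig_event i \<theta>)"
    have Ppos: "P > 0" using ne measure_pmf_posI[of _ J "sig_event i \<theta>"] unfolding P_def by blast
    have P_sum: "P = (\<Sum>a\<in>D\<theta>. pmf J a)"
    proof -
      have "P = measure_pmf.prob J (sig_event i \<theta> \<inter> D)"
        unfolding P_def D_def by (simp add: measure_Int_set_pmf)
      also have "\<dots> = (\<Sum>a\<in>D\<theta>. pmf J a)"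
        by (subst measure_measure_pmf_finite) (use finD in \<open>auto simp: D\<theta>_eq Int_commute\<close>)
      finally show ?thesis .
    qed
    define c where "c = (\<Sum>a\<in>D\<theta>. Y a * pmf J a) / P"
    have Q: "Qf N E \<phi> i x \<theta> = x + c" for x
    proof -
      have "Qf N E \<phi> i x \<theta> = measure_pmf.expectation (cond_pmf J (sig_event i \<theta>)) (\<lambda>a. x + Y a)"
        unfolding Qf_def J_def Y_def by (intro arg_cong[where f="measure_pmf.expectation _"]) (auto simp: Yv_def)
      also have "\<dots> = (\<Sum>a\<in>D\<theta>. (x + Y a) * pmf (cond_pmf J (sig_event i \<theta>)) a)"
        by (rule integral_measure_pmf_real) (use ne finD in \<open>auto simp: D\<theta>_eq D_def\<close>)
      also have "\<dots> = (\<Sum>a\<in>D\<theta>. (x + Y a) * (pmf J a / P))"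
        by (intro sum.cong refl) (simp add: pmf_cond[OF ne] D\<theta>_eq P_def)
      also have "\<dots> = x * ((\<Sum>a\<in>D\<theta>. pmf J a) / P) + c"
        by (simp add: c_def sum_divide_distrib sum_distrib_left distrib_right sum.distrib algebra_simps add_divide_distrib)
      also have "\<dots> = x + c" using Ppos P_sum by simp
      finally show ?thesis .
    qed
    have Pth: "measure_pmf.prob (joint N \<phi>) (sig_event i \<theta>) > 0" using Ppos by (simp add: P_def J_def)
    have hh: "1 \<le> Qf N E \<phi> i \<theta> \<theta> \<and> is_min (\<lambda>x. 0 \<le> x \<and> 1 \<le> Qf N E \<phi> i x \<theta>) \<theta>"
      using pers i thSig Pth unfolding persuasive_def by blast
    have h1: "\<theta> + c \<ge> 1" and h2: "is_min (\<lambda>x. x \<ge> 0 \<and> x + c \<ge> 1) \<theta>"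
      using hh unfolding Q by auto
    have th0: "\<theta> \<ge> 0" using thSig Sig01 by auto
    have key: "\<alpha> \<theta> * (\<theta> + c - 1) \<ge> 0"
    proof (cases "\<theta> = 0")
      case True then show ?thesis using a0 h1 by simp
    next
      case False
      have "\<theta> \<le> max 0 (1 - c)" using h2 unfolding is_min_def by (metis max.cobounded1 max.cobounded2 diff_add_cancel add.commute add_le_cancel_left)
      then have "\<theta> + c - 1 = 0" using False th0 h1 by (simp add: max_def split: if_splits)
      then show ?thesis by simp
    qed
    have "(\<Sum>a\<in>D\<theta>. g a * pmf J a) = \<alpha> \<theta> * ((\<theta> - 1) * (\<Sum>a\<in>D\<theta>. pmf J a) + (\<Sum>a\<in>D\<theta>. Y a * pmf J a))"
      by (simp add: g_alt D\<theta>_def sum_distrib_left algebra_simps sum.distrib sum_subtractf)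
    also have "\<dots> = \<alpha> \<theta> * (\<theta> + c - 1) * P"
      using Ppos by (simp add: P_sum[symmetric] c_def field_simps)
    finally show "0 \<le> (\<Sum>a\<in>{a\<in>D. val a = \<theta>}. g a * pmf J a)"
      using key Ppos unfolding D\<theta>_def by simp
  qed
  finally show ?thesis by (simp add: J_def g_def)
qed

lemma cost_lb:
  assumes sch: "scheme N Sig \<phi>" and pers: "persuasive N E Sig \<phi>" and a0: "\<alpha> 0 \<ge> 0"
    and F: "\<And>s. (\<forall>v<N. 0 \<le> s v \<and> s v \<le> 1) \<Longrightarrow> B \<le> (\<Sum>v<N. s v - \<alpha> (s v) * (s v + Yv N E v s - 1))"
  shows "B \<le> cost N \<phi>"
proof -
  define J where "J = joint N \<phi>"
  define D where "D = set_pmf J"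
  have finD: "finite D" using finite_joint[OF sch] by (simp add: D_def J_def)
  define g where "g = (\<lambda>(i::nat) (t::nat\<Rightarrow>nat,s::nat\<Rightarrow>real). \<alpha> (s (t i)) * (s (t i) + Yv N E (t i) s - 1))"
  have pt: "B + (\<Sum>i<N. g i a) \<le> (case a of (t,s) \<Rightarrow> \<Sum>v<N. \<bar>s v\<bar>)" if a: "a \<in> D" for a
  proof -
    obtain t s where a': "a = (t,s)" by (cases a)
    have ts: "t \<in> profiles N" "s \<in> sigvecs N Sig" using set_joint[OF sch] a a' by (auto simp: D_def J_def)
    have s01: "\<forall>v<N. 0 \<le> s v \<and> s v \<le> 1" using ts(2) sch by (auto simp: sigvecs_def scheme_def)
    have "(\<Sum>i<N. g i a) = (\<Sum>i<N. (\<lambda>v. \<alpha> (s v) * (s v + Yv N E v s - 1)) (t i))"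
      by (simp add: g_def a')
    also have "\<dots> = (\<Sum>v<N. \<alpha> (s v) * (s v + Yv N E v s - 1))"
      by (rule sum.reindex_bij_betw) (use ts(1) in \<open>auto simp: profiles_def intro: permutes_imp_bij\<close>)
    finally have e: "(\<Sum>i<N. g i a) = (\<Sum>v<N. \<alpha> (s v) * (s v + Yv N E v s - 1))" .
    have "(\<Sum>v<N. \<bar>s v\<bar>) = (\<Sum>v<N. s v)" using s01 by (intro sum.cong) auto
    moreover have "B \<le> (\<Sum>v<N. s v) - (\<Sum>v<N. \<alpha> (s v) * (s v + Yv N E v s - 1))"
      using F[OF s01] by (simp add: sum_subtractf)
    ultimately show ?thesis using e a' by simp
  qed
  have int: "integrable (measure_pmf J) f" for f :: "_ \<Rightarrow> real"
    using finD by (simp add: D_def integrable_measure_pmf_finite)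
  have "measure_pmf.expectation J (\<lambda>a. B + (\<Sum>i<N. g i a)) \<le> measure_pmf.expectation J (\<lambda>(t,s). \<Sum>v<N. \<bar>s v\<bar>)"
    by (intro integral_mono_AE int) (use pt in \<open>auto simp: AE_measure_pmf_iff D_def\<close>)
  moreover have "measure_pmf.expectation J (\<lambda>a. B + (\<Sum>i<N. g i a)) = B + (\<Sum>i<N. measure_pmf.expectation J (g i))"
    by (simp add: int Bochner_Integration.integral_add integral_sum)
  moreover have "(\<Sum>i<N. measure_pmf.expectation J (g i)) \<ge> 0"
  proof (rule sum_nonneg)
    fix i assume "i \<in> {..<N}"
    then have "i < N" by simp
    from agent_nonneg[where \<alpha>=\<alpha>, OF sch pers this a0] show "measure_pmf.expectation J (g i) \<ge> 0"
      by (simp add: J_def g_def)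
  qed
  ultimately show ?thesis by (simp add: cost_def J_def)
qed



definition GE :: "nat \<Rightarrow> nat \<Rightarrow> nat \<Rightarrow> nat \<Rightarrow> bool" where
  "GE p m u v \<longleftrightarrow> u < p * Suc m \<and> v < p * Suc m \<and> u \<noteq> v \<and>
     ((u mod Suc m = 0 \<and> v mod Suc m = 0) \<or> (u div Suc m = v div Suc m \<and> (u mod Suc m = 0 \<or> v mod Suc m = 0)))"

lemma leaf_divmod:
  assumes "g * Suc m + 1 \<le> u" "u < g * Suc m + Suc m"
  shows "u div Suc m = g" "u mod Suc m \<noteq> 0"
proof -
  define j where "j = u - g * Suc m"
  have j: "u = g * Suc m + j" "1 \<le> j" "j < Suc m" using assms by (auto simp: j_def)
  show "u div Suc m = g" using j by (simp del: mult_Suc_right)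
  show "u mod Suc m \<noteq> 0" using j by (simp del: mult_Suc_right)
qed

lemma hub_divmod: "(g * Suc m) div Suc m = g" "(g * Suc m) mod Suc m = 0"
  by (simp_all del: mult_Suc_right)

lemma sum_decomp:
  "(\<Sum>v<p * Suc m + r. f v) =
     (\<Sum>g<p. f (g * Suc m) + (\<Sum>u\<in>{g * Suc m + 1..<g * Suc m + Suc m}. f u)) + (\<Sum>i<r. f (p * Suc m + i))"
proof -
  have "(\<Sum>v<p * Suc m + r. f v) = (\<Sum>v<p * Suc m. f v) + (\<Sum>v\<in>{p * Suc m..<p * Suc m + r}. f v)"
    by (simp add: sum.lessThan_Suc split_paired_all atLeast0LessThan[symmetric] sum.atLeastLessThan_concat)
  also have "(\<Sum>v\<in>{p * Suc m..<p * Suc m + r}. f v) = (\<Sum>i<r. f (p * Suc m + i))"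
    by (rule sum.reindex_bij_witness[of _ "\<lambda>i. p * Suc m + i" "\<lambda>v. v - p * Suc m"]) auto
  also have "(\<Sum>v<p * Suc m. f v) = (\<Sum>g<p. \<Sum>u\<in>{g * Suc m..<g * Suc m + Suc m}. f u)"
    by (rule sum.nat_group[symmetric])
  also have "\<dots> = (\<Sum>g<p. f (g * Suc m) + (\<Sum>u\<in>{g * Suc m + 1..<g * Suc m + Suc m}. f u))"
    by (intro sum.cong refl) (simp add: sum.atLeast_Suc_lessThan add.assoc)
  finally show ?thesis .
qed

lemma Yv_alt:
  assumes irr: "\<And>v. \<not> E v v"
  shows "Yv N E v s = (\<Sum>u<N. if E v u then s u else 0)"
proof -
  have "Yv N E v s = (\<Sum>u\<in>{..<N}-{v}. if E v u then s u else 0)"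
    unfolding Yv_def by (intro sum.cong refl) (auto simp: Wm_def)
  also have "\<dots> = (\<Sum>u<N. if E v u then s u else 0)"
    by (rule sum.mono_neutral_left) (use irr in auto)
  finally show ?thesis .
qed

lemma GE_irr: "\<not> GE p m v v" by (simp add: GE_def)

lemma Yv_hub:
  assumes g: "g < p"
  shows "Yv (p * Suc m + r) (GE p m) (g * Suc m) s =
    (\<Sum>g'\<in>{..<p}-{g}. s (g' * Suc m)) + (\<Sum>u\<in>{g * Suc m + 1..<g * Suc m + Suc m}. s u)"
proof -
  let ?b = "Suc m"
  let ?h = "\<lambda>u. if GE p m (g * ?b) u then s u else 0"
  have gb: "g * ?b < p * ?b" using g by (simp only: mult_less_cancel2) simp
  have iso: "?h (p * ?b + i) = 0" for i by (simp add: GE_def)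
  have hubs: "?h (g' * ?b) = (if g' \<noteq> g then s (g' * ?b) else 0)" if "g' < p" for g'
    using that gb by (auto simp add: GE_def hub_divmod simp del: mult_Suc_right)
  have leaves: "(\<Sum>u\<in>{g' * ?b + 1..<g' * ?b + ?b}. ?h u) =
      (if g' = g then (\<Sum>u\<in>{g * ?b + 1..<g * ?b + ?b}. s u) else 0)" if "g' < p" for g'
  proof -
    have "?h u = (if g' = g then s u else 0)" if "u \<in> {g' * ?b + 1..<g' * ?b + ?b}" for u
    proof -
      have u: "u div ?b = g'" "u mod ?b \<noteq> 0" using leaf_divmod that by auto
      have "u < p * ?b"
      proof -
        have "u < (g' + 1) * ?b" using that by simp
        also have "\<dots> \<le> p * ?b" using \<open>g' < p\<close> by (intro mult_right_mono) auto
        finally show ?thesis .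
      qed
      then show ?thesis using u gb that by (auto simp add: GE_def hub_divmod simp del: mult_Suc_right)
    qed
    then show ?thesis by (auto intro: sum.neutral)
  qed
  have "Yv (p * ?b + r) (GE p m) (g * ?b) s = (\<Sum>u<p * ?b + r. ?h u)"
    by (rule Yv_alt) (rule GE_irr)
  also have "\<dots> = (\<Sum>g'<p. ?h (g' * ?b) + (\<Sum>u\<in>{g' * ?b + 1..<g' * ?b + ?b}. ?h u)) + (\<Sum>i<r. ?h (p * ?b + i))"
    by (rule sum_decomp)
  also have "\<dots> = (\<Sum>g'<p. (if g' \<noteq> g then s (g' * ?b) else 0) + (if g' = g then (\<Sum>u\<in>{g * ?b + 1..<g * ?b + ?b}. s u) else 0))"
  proof -
    have "(\<Sum>i<r. ?h (p * ?b + i)) = 0" using iso by (intro sum.neutral) blast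
    moreover have "?h (g' * ?b) + (\<Sum>u\<in>{g' * ?b + 1..<g' * ?b + ?b}. ?h u) =
        (if g' \<noteq> g then s (g' * ?b) else 0) + (if g' = g then (\<Sum>u\<in>{g * ?b + 1..<g * ?b + ?b}. s u) else 0)"
      if "g' \<in> {..<p}" for g'
      using that hubs[of g'] leaves[of g'] by (simp only: lessThan_iff)
    then have "(\<Sum>g'<p. ?h (g' * ?b) + (\<Sum>u\<in>{g' * ?b + 1..<g' * ?b + ?b}. ?h u)) =
       (\<Sum>g'<p. (if g' \<noteq> g then s (g' * ?b) else 0) + (if g' = g then (\<Sum>u\<in>{g * ?b + 1..<g * ?b + ?b}. s u) else 0))"
      by (rule sum.cong[OF refl])
    ultimately show ?thesis by (simp only: add_0_right)
  qed
  also have "\<dots> = (\<Sum>g'\<in>{..<p}-{g}. s (g' * ?b)) + (\<Sum>u\<in>{g * ?b + 1..<g * ?b + ?b}. s u)"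
    using g by (simp add: sum.distrib sum.If_cases Diff_eq Int_commute Compl_eq del: mult_Suc_right)
  finally show ?thesis .
qed

lemma leaf_lt: assumes "g < p" "u < g * Suc m + Suc m" shows "u < p * Suc m"
proof -
  have "u < (g + 1) * Suc m" using assms by simp
  also have "\<dots> \<le> p * Suc m" using assms by (intro mult_right_mono) auto
  finally show ?thesis .
qed

lemma Yv_leaf:
  assumes g: "g < p" and u: "u \<in> {g * Suc m + 1..<g * Suc m + Suc m}"
  shows "Yv (p * Suc m + r) (GE p m) u s = s (g * Suc m)"
proof -
  let ?b = "Suc m"
  let ?h = "\<lambda>w. if GE p m u w then s w else 0"
  have ud: "u div ?b = g" "u mod ?b \<noteq> 0" using leaf_divmod u by auto
  have ul: "u < p * ?b" using leaf_lt[OF g] u by auto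
  have iso: "?h (p * ?b + i) = 0" for i by (simp add: GE_def)
  have hubs: "?h (g' * ?b) = (if g' = g then s (g' * ?b) else 0)" if "g' < p" for g'
  proof -
    have "g' * ?b < p * ?b" using that by (simp only: mult_less_cancel2) simp
    moreover have "u \<noteq> g' * ?b" using ud hub_divmod(2)[of g' m] by metis
    ultimately show ?thesis using ud ul hub_divmod[of g' m] by (auto simp add: GE_def simp del: mult_Suc_right)
  qed
  have leaves: "(\<Sum>w\<in>{g' * ?b + 1..<g' * ?b + ?b}. ?h w) = 0" for g'
  proof (rule sum.neutral, rule ballI)
    fix w assume "w \<in> {g' * ?b + 1..<g' * ?b + ?b}"
    then have "w mod ?b \<noteq> 0" using leaf_divmod by auto
    then show "?h w = 0" using ud by (auto simp: GE_def)
  qed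
  have "Yv (p * ?b + r) (GE p m) u s = (\<Sum>w<p * ?b + r. ?h w)"
    by (rule Yv_alt) (rule GE_irr)
  also have "\<dots> = (\<Sum>g'<p. ?h (g' * ?b) + (\<Sum>w\<in>{g' * ?b + 1..<g' * ?b + ?b}. ?h w)) + (\<Sum>i<r. ?h (p * ?b + i))"
    by (rule sum_decomp)
  also have "\<dots> = (\<Sum>g'<p. (if g' = g then s (g' * ?b) else 0))"
  proof -
    have "(\<Sum>i<r. ?h (p * ?b + i)) = 0" using iso by (intro sum.neutral) blast
    moreover have "?h (g' * ?b) + (\<Sum>w\<in>{g' * ?b + 1..<g' * ?b + ?b}. ?h w) = (if g' = g then s (g' * ?b) else 0)"
      if "g' \<in> {..<p}" for g'
      using that hubs[of g'] leaves[of g'] by (simp only: lessThan_iff add_0_right)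
    then have "(\<Sum>g'<p. ?h (g' * ?b) + (\<Sum>w\<in>{g' * ?b + 1..<g' * ?b + ?b}. ?h w)) = (\<Sum>g'<p. (if g' = g then s (g' * ?b) else 0))"
      by (rule sum.cong[OF refl])
    ultimately show ?thesis by (simp only: add_0_right)
  qed
  also have "\<dots> = s (g * ?b)" using g by (simp add: sum.delta del: mult_Suc_right)
  finally show ?thesis .
qed

lemma Yv_iso:
  shows "Yv (p * Suc m + r) (GE p m) (p * Suc m + i) s = 0"
  by (subst Yv_alt[OF GE_irr]) (simp add: GE_def)



definition al :: "real \<Rightarrow> real \<Rightarrow> real" where
  "al M x = (if x < 2/3 then 1/4 else if x < 1 then -1/(4*(1-x)) else -M)"

lemma al_le: "M \<ge> 0 \<Longrightarrow> al M x \<le> 1/4"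
proof -
  assume M: "M \<ge> 0"
  have "x < 1 \<Longrightarrow> -1/(4*(1-x)) \<le> 1/4"
  proof -
    assume "x < 1" then have "1/(4*(1-x)) \<ge> 0" by simp
    then show ?thesis by linarith
  qed
  then show ?thesis using M by (auto simp: al_def)
qed

lemma hub_pointwise:
  fixes T p m S y :: real
  assumes T: "T * T = p * m" "T \<ge> 0" and p: "p \<ge> 2" and S1: "S - 1 \<ge> 3 * p / 8" and Sp: "S \<le> p"
    and y: "0 \<le> y" "y \<le> 1" and m: "m \<ge> 0"
  shows "- al T y * (S - 1) + m / 4 * (1 - y) \<ge> T / 12 - 3 * (T / 12 + p / 4) * (1 - y)"
proof (cases "y < 2/3")
  case True
  have "T / 12 - 3 * (T / 12 + p / 4) * (1 - y) \<le> T / 12 - (T / 12 + p / 4)"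
  proof -
    have "3 * (1 - y) \<ge> 1" using True by simp
    then have "(T / 12 + p / 4) * 1 \<le> (T / 12 + p / 4) * (3 * (1 - y))"
      using T(2) p by (intro mult_left_mono) auto
    then show ?thesis by (simp add: algebra_simps diff_divide_distrib)
  qed
  also have "\<dots> = - p / 4" by simp
  also have "\<dots> \<le> - (1/4) * (S - 1)" using Sp by simp
  also have "\<dots> \<le> - al T y * (S - 1) + m / 4 * (1 - y)" using True y m by (simp add: al_def)
  finally show ?thesis .
next
  case False
  have rhs: "T / 12 - 3 * (T / 12 + p / 4) * (1 - y) \<le> T / 12"
    using y T(2) p by simp
  show ?thesis
  proof (cases "y < 1")
    case True
    define e where "e = 1 - y"
    have e: "e > 0" "e \<le> 1/3" using True False by (auto simp: e_def)
    have lhs: "- al T y * (S - 1) + m / 4 * (1 - y) = (S - 1) / (4 * e) + m / 4 * e"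
      using True False by (simp add: al_def e_def)
    have "T / 12 \<le> (S - 1) / (4 * e) + m / 4 * e"
    proof (cases "m / 4 * e \<ge> T / 12")
      case True
      moreover have "(S - 1) / (4 * e) \<ge> 0" using S1 p e by simp
      ultimately show ?thesis by linarith
    next
      case c: False
      then have ec: "3 * m * e < T" by simp
      have Tpos: "T > 0"
      proof (rule ccontr)
        assume "\<not> T > 0" then have "T = 0" using T(2) by simp
        moreover have "e * m \<ge> 0" using e m by simp
        ultimately show False using ec by simp
      qed
      have "T / 12 \<le> 9 * T / 32" using Tpos by simp
      also have "9 * T / 32 = 9 * (p * m) / (32 * T)" using Tpos T(1) by (simp add: field_simps)
      also have "\<dots> \<le> (3 * p / 8) / (4 * e)"
      proof -
        have "9 * (p * m) / (32 * T) = (3 * p / 32) * (3 * m / T)" by (simp add: field_simps)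
        also have "\<dots> \<le> (3 * p / 32) * (1 / e)"
          using ec e Tpos p by (intro mult_left_mono) (auto simp: field_simps)
        also have "\<dots> = (3 * p / 8) / (4 * e)" by (simp add: field_simps)
        finally show ?thesis .
      qed
      also have "\<dots> \<le> (S - 1) / (4 * e)" using S1 e by (intro divide_right_mono) auto
      also have "\<dots> \<le> (S - 1) / (4 * e) + m / 4 * e" using m e by simp
      finally show ?thesis .
    qed
    then show ?thesis using lhs rhs by linarith
  next
    case c: False
    then have "y = 1" using y by simp
    then have "- al T y * (S - 1) + m / 4 * (1 - y) = T * (S - 1)" by (simp add: al_def)
    moreover have "T * (S - 1) \<ge> T * (3 * p / 8)" using S1 T(2) by (intro mult_left_mono) auto
    moreover have "T * (3 * p / 8) \<ge> T * (1 / 12)" using p T(2) by (intro mult_left_mono) auto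
    ultimately show ?thesis using rhs by linarith
  qed
qed

lemma hub_core:
  fixes y :: "nat \<Rightarrow> real" and p m :: nat
  assumes p2: "p \<ge> 2" and mp: "real m \<ge> 576 * real p" and y01: "\<And>g. g < p \<Longrightarrow> 0 \<le> y g \<and> y g \<le> 1"
  shows "(\<Sum>g<p. y g) - (\<Sum>g<p. al (sqrt (real p * real m)) (y g)) * ((\<Sum>g<p. y g) - 1)
           + real m / 4 * (\<Sum>g<p. 1 - y g) \<ge> real p * sqrt (real p * real m) / 24"
proof -
  define T where "T = sqrt (real p * real m)"
  define S where "S = (\<Sum>g<p. y g)"
  define A where "A = (\<Sum>g<p. al T (y g))"
  define P where "P = real p"
  define Mm where "Mm = real m"
  have P2: "P \<ge> 2" using p2 by (simp add: P_def)
  have MP: "Mm \<ge> 576 * P" using mp by (simp add: P_def Mm_def)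
  have T0: "T \<ge> 0" by (simp add: T_def)
  have TT: "T * T = P * Mm" by (simp add: T_def P_def Mm_def)
  have T24: "T \<ge> 24 * P"
  proof -
    have "(24 * P) * (24 * P) \<le> P * Mm" using MP P2 by (simp add: mult_left_mono algebra_simps)
    then have "(24 * P) * (24 * P) \<le> T * T" using TT by simp
    then show ?thesis using T0 power2_le_imp_le[of "24 * P" T] by (simp only: power2_eq_square)
  qed
  have Tm: "T \<le> Mm / 24"
  proof -
    have "T * T \<le> (Mm / 24) * (Mm / 24)" using TT MP P2 by (simp add: mult_right_mono algebra_simps)
    moreover have "Mm / 24 \<ge> 0" using MP P2 by simp
    ultimately show ?thesis using power2_le_imp_le[of T "Mm / 24"] by (simp only: power2_eq_square)
  qed
  have PT: "P * T \<le> P * Mm / 24" using Tm P2 by (simp add: mult_left_mono)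
  have PP: "P * P \<le> P * T / 24" using T24 P2 by (simp add: mult_left_mono)
  have S0: "S \<ge> 0" unfolding S_def using y01 by (intro sum_nonneg) auto
  have SP: "S \<le> P" unfolding S_def P_def using sum_mono[of "{..<p}" y "\<lambda>_. 1"] y01 by auto
  have sc: "(\<Sum>g<p. 1 - y g) = P - S" by (simp add: S_def P_def sum_subtractf)
  have AP: "A \<le> P / 4" unfolding A_def P_def using sum_mono[of "{..<p}" "\<lambda>g. al T (y g)" "\<lambda>_. 1/4"] al_le[OF T0] by auto
  have MP2: "P * Mm \<ge> 2304"
  proof -
    have "P * Mm \<ge> 2 * (576 * 2)" using P2 MP by (intro mult_mono) auto
    then show ?thesis by simp
  qed
  have goal: "S - A * (S - 1) + Mm / 4 * (P - S) \<ge> P * T / 24"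
  proof (cases "S \<le> 1")
    case True
    have claim: "(1 - S) * A \<ge> -1/4"
    proof (cases "\<forall>g<p. y g < 2/3")
      case True
      then have "A = P / 4" unfolding A_def P_def by (simp add: al_def)
      then have "A \<ge> 0" using P2 by simp
      then have "(1 - S) * A \<ge> 0" using \<open>S \<le> 1\<close> by simp
      then show ?thesis by linarith
    next
      case False
      then obtain g0 where g0: "g0 < p" "y g0 \<ge> 2/3" by (auto simp: not_less)
      have yS: "y g + y g0 \<le> S" if "g < p" "g \<noteq> g0" for g
      proof -
        have "(\<Sum>x\<in>{g, g0}. y x) \<le> S" unfolding S_def
          using that g0 y01 by (intro sum_mono2) auto
        then show ?thesis using that by simp
      qed
      have others: "al T (y g) = 1/4" if "g \<in> {..<p} - {g0}" for g
      proof -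
        have "y g < 2/3" using yS[of g] that g0 \<open>S \<le> 1\<close> by auto
        then show ?thesis by (simp add: al_def)
      qed
      have "A = al T (y g0) + (\<Sum>g\<in>{..<p} - {g0}. al T (y g))"
        unfolding A_def using g0 by (simp add: sum.remove)
      also have "\<dots> = al T (y g0) + (\<Sum>g\<in>{..<p} - {g0}. 1/4)" using others by (metis (no_types, lifting) sum.cong)
      finally have "A \<ge> al T (y g0)" by simp
      then have "(1 - S) * A \<ge> (1 - S) * al T (y g0)" using \<open>S \<le> 1\<close> by (intro mult_left_mono) auto
      moreover have "(1 - S) * al T (y g0) \<ge> -1/4"
      proof (cases "y g0 < 1")
        case True
        have Sy: "y g0 \<le> S" unfolding S_def using g0 y01 by (intro member_le_sum) auto
        define q where "q = (1 - S) / (1 - y g0)"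
        have "(1 - S) * al T (y g0) = - q / 4"
          using True g0 by (simp add: al_def q_def)
        moreover have "q \<le> 1" using True Sy by (simp add: q_def)
        ultimately show ?thesis by linarith
      next
        case False
        have Sy: "y g0 \<le> S" unfolding S_def using g0 y01 by (intro member_le_sum) auto
        then have "S = 1" using False \<open>S \<le> 1\<close> by simp
        then show ?thesis by simp
      qed
      ultimately show ?thesis by simp
    qed
    have "Mm / 4 * (P - S) \<ge> Mm / 4 * (P - 1)" using True MP P2 by (intro mult_left_mono) auto
    moreover have "Mm / 4 * (P - 1) \<ge> P * Mm / 8"
    proof -
      have e: "Mm / 4 * (P - 1) = P * Mm / 4 - Mm / 4" by (simp add: field_simps)
      have "2 * Mm \<le> P * Mm" using P2 MP by (intro mult_right_mono) auto
      then show ?thesis unfolding e by linarith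
    qed
    ultimately have c2: "Mm / 4 * (P - S) \<ge> P * Mm / 8" by linarith
    have "A * (S - 1) = - ((1 - S) * A)" by (simp add: algebra_simps)
    then have c1: "A * (S - 1) \<le> 1/4" using claim by linarith
    have c3: "P * T / 24 \<le> P * Mm / 8 - 1/4" using PT MP2 by linarith
    show ?thesis using c1 c2 c3 S0 by linarith
  next
    case False
    show ?thesis
    proof (cases "P - S \<ge> P / 8")
      case True
      have "A * (S - 1) \<le> (P / 4) * (S - 1)" using AP False by (intro mult_right_mono) auto
      also have "\<dots> \<le> (P / 4) * P" using SP P2 by (intro mult_left_mono) auto
      finally have a: "A * (S - 1) \<le> P * P / 4" by simp
      have b: "Mm / 4 * (P - S) \<ge> Mm / 4 * (P / 8)" using True MP P2 by (intro mult_left_mono) auto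
      have "Mm / 4 * (P / 8) = P * Mm / 32" by (simp add: field_simps)
      then have b': "Mm / 4 * (P - S) \<ge> P * Mm / 32" using b by linarith
      show ?thesis using a b' PT PP S0 MP2 by linarith
    next
      case c: False
      have S1: "S - 1 \<ge> 3 * P / 8" using c P2 by simp
      have pw: "- al T (y g) * (S - 1) + Mm / 4 * (1 - y g) \<ge> T / 12 - 3 * (T / 12 + P / 4) * (1 - y g)"
        if "g \<in> {..<p}" for g
        using hub_pointwise[OF TT T0 P2 S1 SP _ _ ] y01[of g] that MP P2 by auto
      have "(\<Sum>g<p. T / 12 - 3 * (T / 12 + P / 4) * (1 - y g)) \<le> (\<Sum>g<p. - al T (y g) * (S - 1) + Mm / 4 * (1 - y g))"
        using pw by (rule sum_mono)
      moreover have "(\<Sum>g<p. T / 12 - 3 * (T / 12 + P / 4) * (1 - y g)) = P * T / 12 - 3 * (T / 12 + P / 4) * (P - S)"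
        using sc by (simp add: sum_subtractf sum_distrib_left[symmetric] P_def)
      moreover have "(\<Sum>g<p. - al T (y g) * (S - 1) + Mm / 4 * (1 - y g)) = - A * (S - 1) + Mm / 4 * (P - S)"
      proof -
        have "(\<Sum>g<p. - al T (y g) * (S - 1) + Mm / 4 * (1 - y g)) = (\<Sum>g<p. - al T (y g) * (S - 1)) + (\<Sum>g<p. Mm / 4 * (1 - y g))"
          by (rule sum.distrib)
        also have "(\<Sum>g<p. - al T (y g) * (S - 1)) = - A * (S - 1)"
          by (simp only: A_def sum_distrib_right[symmetric] sum_negf)
        also have "(\<Sum>g<p. Mm / 4 * (1 - y g)) = Mm / 4 * (P - S)"
          by (simp only: sum_distrib_left[symmetric] sc)
        finally show ?thesis .
      qed
      moreover have "3 * (T / 12 + P / 4) * (P - S) \<le> 3 * (T / 12 + P / 4) * (P / 8)"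
        using c T0 P2 by (intro mult_left_mono) auto
      ultimately have "- A * (S - 1) + Mm / 4 * (P - S) \<ge> P * T / 12 - 3 * (T / 12 + P / 4) * (P / 8)" by linarith
      moreover have "3 * (T / 12 + P / 4) * (P / 8) = P * T / 32 + 3 * (P * P) / 32" by (simp add: field_simps)
      moreover have "- A * (S - 1) = - (A * (S - 1))" by simp
      moreover have "P * T \<ge> 0" using P2 T0 by simp
      ultimately show ?thesis using PP S0 by linarith
    qed
  qed
  then show ?thesis by (simp add: S_def A_def T_def P_def Mm_def sc)
qed

lemma G_bound:
  assumes x: "0 \<le> x" "x \<le> 1" and y: "0 \<le> y" "y \<le> 1" and M: "M \<ge> 0"
  shows "x - al M x * (x + y - 1) - al M y * x \<ge> (1 - y) / 4"
proof -
  have ay: "al M y * x \<le> x / 4" using al_le[OF M, of y] x by (metis mult_right_mono times_divide_eq_left mult_1 )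
  show ?thesis
  proof (cases "x < 2/3")
    case True
    then have ax: "al M x = 1/4" by (simp add: al_def)
    have "x - al M x * (x + y - 1) - al M y * x = (1 - y) / 4 + 3 * x / 4 - al M y * x"
      unfolding ax by (simp add: field_simps)
    then show ?thesis using ay x by linarith
  next
    case False
    show ?thesis
    proof (cases "x < 1")
      case True
      have ax: "al M x = -1/(4*(1-x))" using True False by (simp add: al_def)
      have "- al M x * (x + y - 1) = (x + y - 1) / (4 * (1 - x))" by (simp add: ax)
      also have "\<dots> \<ge> (x - 1) / (4 * (1 - x))" using True y by (intro divide_right_mono) auto
      moreover have "(x - 1) / (4 * (1 - x)) = -1/4" using True by (simp add: field_simps)
      ultimately have "- al M x * (x + y - 1) \<ge> -1/4" by simp
      then have h1: "al M x * (x + y - 1) \<le> 1/4" by simp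
      have h2: "x \<ge> 2/3" using False by simp
      show ?thesis
      proof -
        define t1 where "t1 = al M x * (x + y - 1)"
        define t2 where "t2 = al M y * x"
        have "t1 \<le> 1/4" "t2 \<le> x / 4" using h1 ay by (simp_all add: t1_def t2_def)
        then have a: "x - t1 - t2 \<ge> 3 * x / 4 - 1/4" by simp
        have b: "3 * x / 4 - 1/4 \<ge> 1/4" using h2 by simp
        have c: "(1 - y) / 4 \<le> 1/4" using y(1) by simp
        from a b c have "(1 - y) / 4 \<le> x - t1 - t2" by (rule_tac order_trans[OF c], rule_tac order_trans[OF b a])
        then show ?thesis by (simp add: t1_def t2_def)
      qed
    next
      case c: False
      then have "x = 1" using x by simp
      then have "x - al M x * (x + y - 1) - al M y * x = 1 + M * y - al M y" by (simp add: al_def)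
      moreover have "M * y \<ge> 0" using M y by simp
      ultimately show ?thesis using al_le[OF M, of y] y by simp
    qed
  qed
qed

lemma iso_bound:
  assumes "0 \<le> z" "z \<le> 1" "M \<ge> 0"
  shows "z - al M z * (z + 0 - 1) \<ge> 0"
proof -
  have "z - al M z * (z + 0 - 1) - al M 0 * z \<ge> (1 - 0) / 4" using G_bound[of z 0 M] assms by simp
  moreover have "al M 0 = 1/4" by (simp add: al_def)
  ultimately show ?thesis using assms by simp
qed



lemma F_bound:
  fixes p m r :: nat and s :: "nat \<Rightarrow> real"
  assumes p2: "p \<ge> 2" and mp: "real m \<ge> 576 * real p"
    and s01: "\<forall>v<p * Suc m + r. 0 \<le> s v \<and> s v \<le> 1"
  shows "real p * sqrt (real p * real m) / 24 \<le>
    (\<Sum>v<p * Suc m + r. s v - al (sqrt (real p * real m)) (s v) * (s v + Yv (p * Suc m + r) (GE p m) v s - 1))"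
proof -
  define T where "T = sqrt (real p * real m)"
  define N where "N = p * Suc m + r"
  define b where "b = Suc m"
  define y where "y = (\<lambda>g. s (g * b))"
  define S where "S = (\<Sum>g<p. y g)"
  define L where "L = (\<lambda>g. {g * b + 1..<g * b + b})"
  define \<Phi> where "\<Phi> = (\<lambda>v. s v - al T (s v) * (s v + Yv N (GE p m) v s - 1))"
  have T0: "T \<ge> 0" by (simp add: T_def)
  have cardL: "card (L g) = m" for g by (simp add: L_def b_def)
  have y01: "0 \<le> y g \<and> y g \<le> 1" if "g < p" for g
  proof -
    have "g * b < p * b" using that unfolding b_def by (simp only: mult_less_cancel2) simp
    then show ?thesis using s01 by (simp add: y_def N_def b_def)
  qed
  have L01: "0 \<le> s u \<and> s u \<le> 1" if "g < p" "u \<in> L g" for g u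
  proof -
    have "u < p * Suc m" using leaf_lt[OF that(1)] that(2) by (simp add: L_def b_def)
    then show ?thesis using s01 by auto
  qed
  have group: "\<Phi> (g * b) + (\<Sum>u\<in>L g. \<Phi> u) \<ge> y g - al T (y g) * (S - 1) + real m / 4 * (1 - y g)"
    if g: "g < p" for g
  proof -
    have Yh: "Yv N (GE p m) (g * b) s = (S - y g) + (\<Sum>u\<in>L g. s u)"
      using Yv_hub[OF g, of m r s] g by (simp add: N_def b_def L_def S_def y_def sum_diff1)
    have Yl: "Yv N (GE p m) u s = y g" if "u \<in> L g" for u
      using Yv_leaf[OF g, of u m r s] that by (simp add: N_def b_def L_def y_def)
    have "\<Phi> (g * b) = y g - al T (y g) * (S - 1) - (\<Sum>u\<in>L g. al T (y g) * s u)"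
    proof -
      have "\<Phi> (g * b) = y g - al T (y g) * (y g + ((S - y g) + (\<Sum>u\<in>L g. s u)) - 1)"
        unfolding \<Phi>_def Yh by (simp add: y_def)
      also have "\<dots> = y g - al T (y g) * (S - 1) - al T (y g) * (\<Sum>u\<in>L g. s u)"
        by (simp add: algebra_simps)
      finally show ?thesis by (simp add: sum_distrib_left)
    qed
    moreover have "(\<Sum>u\<in>L g. \<Phi> u) = (\<Sum>u\<in>L g. s u - al T (s u) * (s u + y g - 1))"
      by (intro sum.cong refl) (simp add: \<Phi>_def Yl)
    ultimately have e: "\<Phi> (g * b) + (\<Sum>u\<in>L g. \<Phi> u) =
        y g - al T (y g) * (S - 1) + (\<Sum>u\<in>L g. s u - al T (s u) * (s u + y g - 1) - al T (y g) * s u)"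
      using sum_subtractf[of "\<lambda>u. s u - al T (s u) * (s u + y g - 1)" "\<lambda>u. al T (y g) * s u" "L g"] by linarith
    have "(\<Sum>u\<in>L g. s u - al T (s u) * (s u + y g - 1) - al T (y g) * s u) \<ge> (\<Sum>u\<in>L g. (1 - y g) / 4)"
      by (intro sum_mono G_bound) (use L01[OF g] y01[OF g] T0 in auto)
    moreover have "(\<Sum>u\<in>L g. (1 - y g) / 4) = real m / 4 * (1 - y g)" by (simp add: cardL)
    ultimately show ?thesis using e by linarith
  qed
  have iso: "\<Phi> (p * b + i) \<ge> 0" if "i < r" for i
  proof -
    have "Yv N (GE p m) (p * b + i) s = 0" unfolding N_def b_def by (rule Yv_iso)
    moreover have "0 \<le> s (p * b + i) \<and> s (p * b + i) \<le> 1" using s01 that by (simp add: b_def)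
    ultimately show ?thesis using iso_bound[of "s (p * b + i)" T] T0 by (simp add: \<Phi>_def)
  qed
  have "(\<Sum>v<N. \<Phi> v) = (\<Sum>g<p. \<Phi> (g * b) + (\<Sum>u\<in>L g. \<Phi> u)) + (\<Sum>i<r. \<Phi> (p * b + i))"
    unfolding N_def b_def L_def by (rule sum_decomp)
  moreover have "(\<Sum>i<r. \<Phi> (p * b + i)) \<ge> 0" using iso by (intro sum_nonneg) auto
  moreover have "(\<Sum>g<p. \<Phi> (g * b) + (\<Sum>u\<in>L g. \<Phi> u)) \<ge> (\<Sum>g<p. y g - al T (y g) * (S - 1) + real m / 4 * (1 - y g))"
    using group by (intro sum_mono) auto
  moreover have "(\<Sum>g<p. y g - al T (y g) * (S - 1) + real m / 4 * (1 - y g)) =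
      S - (\<Sum>g<p. al T (y g)) * (S - 1) + real m / 4 * (\<Sum>g<p. 1 - y g)"
  proof -
    have "(\<Sum>g<p. y g - al T (y g) * (S - 1) + real m / 4 * (1 - y g)) =
       (\<Sum>g<p. y g) - (\<Sum>g<p. al T (y g) * (S - 1)) + (\<Sum>g<p. real m / 4 * (1 - y g))"
      by (simp only: sum.distrib sum_subtractf)
    also have "(\<Sum>g<p. al T (y g) * (S - 1)) = (\<Sum>g<p. al T (y g)) * (S - 1)"
      by (rule sum_distrib_right[symmetric])
    also have "(\<Sum>g<p. real m / 4 * (1 - y g)) = real m / 4 * (\<Sum>g<p. 1 - y g)"
      by (rule sum_distrib_left[symmetric])
    finally show ?thesis by (simp only: S_def)
  qed
  moreover have "S - (\<Sum>g<p. al T (y g)) * (S - 1) + real m / 4 * (\<Sum>g<p. 1 - y g) \<ge> real p * T / 24"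
    using hub_core[OF p2 mp, of y] y01 unfolding S_def T_def by auto
  ultimately have "(\<Sum>v<N. \<Phi> v) \<ge> real p * T / 24" by linarith
  then show ?thesis by (simp add: \<Phi>_def N_def T_def)
qed



lemma is_min_iff: "is_min (\<lambda>x. 0 \<le> x \<and> 1 \<le> x + c) t \<longleftrightarrow> t = max 0 (1 - c)"
proof
  assume h: "is_min (\<lambda>x. 0 \<le> x \<and> 1 \<le> x + c) t"
  then have a: "0 \<le> t" "1 \<le> t + c" and b: "\<And>y. 0 \<le> y \<Longrightarrow> 1 \<le> y + c \<Longrightarrow> t \<le> y"
    unfolding is_min_def by auto
  have "t \<le> max 0 (1 - c)" by (rule b) (auto simp: max_def)
  then show "t = max 0 (1 - c)" using a by (auto simp: max_def)
next
  assume "t = max 0 (1 - c)"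
  then show "is_min (\<lambda>x. 0 \<le> x \<and> 1 \<le> x + c) t" unfolding is_min_def by (auto simp: max_def)
qed

lemma rowsum: assumes "v < N" shows "(\<Sum>u<N. Wm E v u * \<theta> u) = \<theta> v + Yv N E v \<theta>"
proof -
  have "(\<Sum>u<N. Wm E v u * \<theta> u) = Wm E v v * \<theta> v + (\<Sum>u\<in>{..<N}-{v}. Wm E v u * \<theta> u)"
    using assms by (subst sum.remove[of _ v]) auto
  then show ?thesis by (simp add: Wm_def Yv_def)
qed

lemma stable_iff: "stable N E \<theta> \<longleftrightarrow> (\<forall>v<N. \<theta> v = max 0 (1 - Yv N E v \<theta>))"
proof
  assume "stable N E \<theta>"
  then show "\<forall>v<N. \<theta> v = max 0 (1 - Yv N E v \<theta>)"
    unfolding stable_def Yv_def[symmetric] by (simp add: is_min_iff)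
next
  assume h: "\<forall>v<N. \<theta> v = max 0 (1 - Yv N E v \<theta>)"
  have "feasible N E \<theta>"
    unfolding feasible_def
  proof (intro conjI allI impI)
    fix v assume v: "v < N"
    show "0 \<le> \<theta> v" using h v by (metis max.cobounded1)
    have "1 \<le> \<theta> v + Yv N E v \<theta>" using h v by (metis add.commute diff_le_eq max.cobounded2)
    then show "1 \<le> (\<Sum>u<N. Wm E v u * \<theta> u)" using rowsum[OF v] by simp
  qed
  then show "stable N E \<theta>"
    unfolding stable_def Yv_def[symmetric] using h by (simp add: is_min_iff)
qed

lemma vcases:
  assumes v: "v < p * Suc m + r"
    and H: "\<And>g. g < p \<Longrightarrow> v = g * Suc m \<Longrightarrow> P"
    and L: "\<And>g. g < p \<Longrightarrow> v \<in> {g * Suc m + 1..<g * Suc m + Suc m} \<Longrightarrow> P"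
    and I: "\<And>i. i < r \<Longrightarrow> v = p * Suc m + i \<Longrightarrow> P"
  shows P
proof (cases "v < p * Suc m")
  case True
  define g where "g = v div Suc m"
  have g: "g < p" using True by (simp add: g_def less_mult_imp_div_less)
  have vg: "v = g * Suc m + v mod Suc m" unfolding g_def by (rule div_mult_mod_eq[symmetric])
  show ?thesis
  proof (cases "v mod Suc m = 0")
    case True then show ?thesis using H[OF g] vg by simp
  next
    case False
    define j where "j = v mod Suc m"
    have j: "j < Suc m" "j \<noteq> 0" "v = g * Suc m + j" using False vg by (simp_all add: j_def)
    then have "v \<in> {g * Suc m + 1..<g * Suc m + Suc m}" by (simp only: atLeastLessThan_iff) linarith
    then show ?thesis using L[OF g] by simp
  qed
next
  case False
  then show ?thesis using I[of "v - p * Suc m"] v by simp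
qed

lemma unit_graph_GE: "unit_graph (p * Suc m + r) (GE p m)"
  unfolding unit_graph_def GE_def by auto



lemma hub_lt_N: "g < p \<Longrightarrow> g * Suc m < p * Suc m + r"
proof -
  assume "g < p"
  then have "g * Suc m < p * Suc m" by (simp only: mult_less_cancel2) simp
  then show ?thesis by simp
qed

lemma leaf_lt_N: "g < p \<Longrightarrow> u \<in> {g * Suc m + 1..<g * Suc m + Suc m} \<Longrightarrow> u < p * Suc m + r"
  using leaf_lt[of g p u m] by auto

lemma opt_lower:
  assumes m: "m \<ge> 1" and f: "feasible (p * Suc m + r) (GE p m) \<theta>"
  shows "real (p + r) \<le> (\<Sum>v<p * Suc m + r. \<bar>\<theta> v\<bar>)"
proof -
  define N where "N = p * Suc m + r"
  define L where "L = (\<lambda>g. {g * Suc m + 1..<g * Suc m + Suc m})"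
  have nn: "\<theta> v \<ge> 0" if "v < N" for v using f that by (simp add: feasible_def N_def)
  have cov: "\<theta> v + Yv N (GE p m) v \<theta> \<ge> 1" if "v < N" for v
  proof -
    have "1 \<le> (\<Sum>u<N. Wm (GE p m) v u * \<theta> u)" using f that unfolding feasible_def N_def by blast
    then show ?thesis using rowsum[OF that, of "GE p m" \<theta>] by simp
  qed
  have grp: "\<bar>\<theta> (g * Suc m)\<bar> + (\<Sum>u\<in>L g. \<bar>\<theta> u\<bar>) \<ge> 1" if g: "g < p" for g
  proof -
    define u0 where "u0 = g * Suc m + 1"
    have u0L: "u0 \<in> L g" using m by (simp add: u0_def L_def)
    have u0N: "u0 < N" using leaf_lt_N[OF g] u0L by (simp add: L_def N_def)
    have gN: "g * Suc m < N" using hub_lt_N[OF g] by (simp add: N_def)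
    have "Yv N (GE p m) u0 \<theta> = \<theta> (g * Suc m)" using Yv_leaf[OF g] u0L by (simp add: L_def N_def)
    then have "\<theta> u0 + \<theta> (g * Suc m) \<ge> 1" using cov[OF u0N] by simp
    moreover have "\<bar>\<theta> u0\<bar> \<le> (\<Sum>u\<in>L g. \<bar>\<theta> u\<bar>)" using u0L by (intro member_le_sum) (auto simp: L_def)
    ultimately show ?thesis using nn[OF gN] nn[OF u0N] by simp
  qed
  have iso: "\<bar>\<theta> (p * Suc m + i)\<bar> \<ge> 1" if "i < r" for i
  proof -
    have iN: "p * Suc m + i < N" using that by (simp add: N_def)
    have "Yv N (GE p m) (p * Suc m + i) \<theta> = 0" unfolding N_def by (rule Yv_iso)
    then show ?thesis using cov[OF iN] by simp
  qed
  have "(\<Sum>v<N. \<bar>\<theta> v\<bar>) = (\<Sum>g<p. \<bar>\<theta> (g * Suc m)\<bar> + (\<Sum>u\<in>L g. \<bar>\<theta> u\<bar>)) + (\<Sum>i<r. \<bar>\<theta> (p * Suc m + i)\<bar>)"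
    unfolding N_def L_def by (rule sum_decomp)
  moreover have "(\<Sum>g<p. \<bar>\<theta> (g * Suc m)\<bar> + (\<Sum>u\<in>L g. \<bar>\<theta> u\<bar>)) \<ge> (\<Sum>g<p. 1)"
    using grp by (intro sum_mono) auto
  moreover have "(\<Sum>i<r. \<bar>\<theta> (p * Suc m + i)\<bar>) \<ge> (\<Sum>i<r. 1)"
    using iso by (intro sum_mono) auto
  ultimately show ?thesis by (simp add: N_def)
qed

definition th0 :: "nat \<Rightarrow> nat \<Rightarrow> nat \<Rightarrow> nat \<Rightarrow> real" where
  "th0 p m r v = (if v < p * Suc m + r \<and> (v < p * Suc m \<longrightarrow> v mod Suc m = 0) then 1 else 0)"

lemma th0_hub: "g < p \<Longrightarrow> th0 p m r (g * Suc m) = 1"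
  using hub_lt_N[of g p m r] by (simp add: th0_def hub_divmod del: mult_Suc_right)

lemma th0_leaf: "g < p \<Longrightarrow> u \<in> {g * Suc m + 1..<g * Suc m + Suc m} \<Longrightarrow> th0 p m r u = 0"
  using leaf_lt[of g p u m] leaf_divmod[of g m u] by (auto simp: th0_def)

lemma th0_iso: "i < r \<Longrightarrow> th0 p m r (p * Suc m + i) = 1"
  by (simp add: th0_def)

lemma th0_feasible: "feasible (p * Suc m + r) (GE p m) (th0 p m r)"
  unfolding feasible_def
proof (intro conjI allI impI)
  fix v assume v: "v < p * Suc m + r"
  show "0 \<le> th0 p m r v" by (simp add: th0_def)
  have "th0 p m r v + Yv (p * Suc m + r) (GE p m) v (th0 p m r) \<ge> 1"
  proof (rule vcases[OF v])
    fix g assume "g < p" "v = g * Suc m"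
    moreover have "Yv (p * Suc m + r) (GE p m) v (th0 p m r) \<ge> 0"
      unfolding Yv_def by (intro sum_nonneg) (auto simp: Wm_def th0_def)
    ultimately show ?thesis using th0_hub by simp
  next
    fix g assume g: "g < p" and u: "v \<in> {g * Suc m + 1..<g * Suc m + Suc m}"
    show ?thesis using Yv_leaf[OF g u] th0_hub[OF g] th0_leaf[OF g u] by simp
  next
    fix i assume "i < r" "v = p * Suc m + i"
    moreover have "Yv (p * Suc m + r) (GE p m) v (th0 p m r) \<ge> 0"
      unfolding Yv_def by (intro sum_nonneg) (auto simp: Wm_def th0_def)
    ultimately show ?thesis using th0_iso by simp
  qed
  then show "1 \<le> (\<Sum>u<p * Suc m + r. Wm (GE p m) v u * th0 p m r u)" using rowsum[OF v] by simp
qed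

lemma th0_sum: "(\<Sum>v<p * Suc m + r. \<bar>th0 p m r v\<bar>) = real (p + r)"
proof -
  have "(\<Sum>v<p * Suc m + r. \<bar>th0 p m r v\<bar>) =
     (\<Sum>g<p. \<bar>th0 p m r (g * Suc m)\<bar> + (\<Sum>u\<in>{g * Suc m + 1..<g * Suc m + Suc m}. \<bar>th0 p m r u\<bar>)) +
     (\<Sum>i<r. \<bar>th0 p m r (p * Suc m + i)\<bar>)"
    by (rule sum_decomp)
  also have "\<dots> = (\<Sum>g<p. 1) + (\<Sum>i<r. 1)"
    by (intro arg_cong2[where f="(+)"] sum.cong refl) (simp_all add: th0_hub th0_leaf th0_iso del: mult_Suc_right)
  finally show ?thesis by simp
qed

lemma OPT_GE:
  assumes m: "m \<ge> 1"
  shows "OPT (p * Suc m + r) (GE p m) = real (p + r)"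
  unfolding OPT_def
proof (rule cInf_eq_minimum)
  show "real (p + r) \<in> {\<Sum>v<p * Suc m + r. \<bar>\<theta> v\<bar> |\<theta>. feasible (p * Suc m + r) (GE p m) \<theta>}"
    using th0_feasible[of p m r] th0_sum[of p m r] by (intro CollectI exI[of _ "th0 p m r"]) simp
next
  fix x assume "x \<in> {\<Sum>v<p * Suc m + r. \<bar>\<theta> v\<bar> |\<theta>. feasible (p * Suc m + r) (GE p m) \<theta>}"
  then show "real (p + r) \<le> x" using opt_lower[OF m] by auto
qed



lemma stable_lower:
  assumes m: "m \<ge> 2" and st: "stable (p * Suc m + r) (GE p m) \<theta>"
  shows "real ((p - 1) * m + r) \<le> (\<Sum>v<p * Suc m + r. \<bar>\<theta> v\<bar>)"
proof -
  define N where "N = p * Suc m + r"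
  define L where "L = (\<lambda>g. {g * Suc m + 1..<g * Suc m + Suc m})"
  define y where "y = (\<lambda>g. \<theta> (g * Suc m))"
  define X where "X = (\<lambda>g. \<Sum>u\<in>L g. \<theta> u)"
  define Oth where "Oth = (\<lambda>g. \<Sum>g'\<in>{..<p}-{g}. y g')"
  have fx: "\<theta> v = max 0 (1 - Yv N (GE p m) v \<theta>)" if "v < N" for v
    using st that unfolding stable_iff N_def by blast
  have nn: "\<theta> v \<ge> 0" if "v < N" for v using fx[OF that] by simp
  have yn: "y g \<ge> 0" if "g < p" for g using nn hub_lt_N[OF that] by (simp add: y_def N_def)
  have On: "Oth g \<ge> 0" if "g < p" for g unfolding Oth_def using yn by (intro sum_nonneg) auto
  have leafv: "\<theta> u = max 0 (1 - y g)" if g: "g < p" and u: "u \<in> L g" for g u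
    using fx[of u] leaf_lt_N[OF g, of u] u Yv_leaf[OF g, of u m r \<theta>] by (simp add: L_def N_def y_def)
  have Xg: "X g = real m * max 0 (1 - y g)" if g: "g < p" for g
  proof -
    have "X g = (\<Sum>u\<in>L g. max 0 (1 - y g))" unfolding X_def using leafv[OF g] by simp
    also have "\<dots> = real m * max 0 (1 - y g)" by (simp add: L_def)
    finally show ?thesis .
  qed
  have hubv: "y g = max 0 (1 - (Oth g + X g))" if g: "g < p" for g
    using fx[of "g * Suc m"] hub_lt_N[OF g] Yv_hub[OF g, of m r \<theta>]
    by (simp add: L_def N_def y_def Oth_def X_def)
  have Xn: "X g \<ge> 0" if "g < p" for g using Xg[OF that] by simp
  have pos: "Oth g = 0" if g: "g < p" and yp: "y g > 0" for g
  proof -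
    have e: "y g = 1 - (Oth g + X g)" using hubv[OF g] yp by (auto simp: max_def split: if_splits)
    have y1: "y g \<le> 1" using e On[OF g] Xn[OF g] by simp
    have "y g = 1"
    proof (rule ccontr)
      assume "y g \<noteq> 1"
      then have lt: "y g < 1" using y1 by simp
      then have "X g = real m * (1 - y g)" using Xg[OF g] by simp
      moreover have "real m * (1 - y g) \<ge> 2 * (1 - y g)" using m lt by (intro mult_right_mono) auto
      ultimately have "X g \<ge> 2 * (1 - y g)" by simp
      then show False using e On[OF g] lt by argo
    qed
    then have "X g = 0" using Xg[OF g] by simp
    then show ?thesis using e \<open>y g = 1\<close> by simp
  qed
  have X0: "X g = real m" if g: "g < p" and "y g = 0" for g using Xg[OF g] that by simp
  have iso: "\<bar>\<theta> (p * Suc m + i)\<bar> = 1" if "i < r" for i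
  proof -
    have "Yv N (GE p m) (p * Suc m + i) \<theta> = 0" unfolding N_def by (rule Yv_iso)
    then show ?thesis using fx[of "p * Suc m + i"] that by (simp add: N_def)
  qed
  have grp: "\<bar>\<theta> (g * Suc m)\<bar> + (\<Sum>u\<in>L g. \<bar>\<theta> u\<bar>) \<ge> X g" if g: "g < p" for g
  proof -
    have "(\<Sum>u\<in>L g. \<bar>\<theta> u\<bar>) = X g" unfolding X_def
      using nn leaf_lt_N[OF g] by (intro sum.cong refl) (auto simp: L_def N_def)
    then show ?thesis by simp
  qed
  have Xsum: "(\<Sum>g<p. X g) \<ge> real ((p - 1) * m)"
  proof (cases "\<forall>g<p. y g = 0")
    case True
    then have "(\<Sum>g<p. X g) = (\<Sum>g<p. real m)" using X0 by simp
    also have "\<dots> = real (p * m)" by simp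
    also have "\<dots> \<ge> real ((p - 1) * m)" by (intro of_nat_mono mult_right_mono) auto
    finally show ?thesis .
  next
    case False
    then obtain g0 where g0: "g0 < p" "y g0 \<noteq> 0" by auto
    then have "y g0 > 0" using yn[of g0] by simp
    then have "Oth g0 = 0" using pos g0 by simp
    then have oz: "\<forall>g\<in>{..<p}-{g0}. y g = 0" unfolding Oth_def
      using yn by (subst (asm) sum_nonneg_eq_0_iff) auto
    have "(\<Sum>g<p. X g) \<ge> (\<Sum>g\<in>{..<p}-{g0}. X g)"
      using Xn by (intro sum_mono2) auto
    also have "(\<Sum>g\<in>{..<p}-{g0}. X g) = (\<Sum>g\<in>{..<p}-{g0}. real m)"
      using X0 oz by (intro sum.cong refl) auto
    also have "\<dots> = real ((p - 1) * m)" using g0 by simp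
    finally show ?thesis .
  qed
  have "(\<Sum>v<N. \<bar>\<theta> v\<bar>) = (\<Sum>g<p. \<bar>\<theta> (g * Suc m)\<bar> + (\<Sum>u\<in>L g. \<bar>\<theta> u\<bar>)) + (\<Sum>i<r. \<bar>\<theta> (p * Suc m + i)\<bar>)"
    unfolding N_def L_def by (rule sum_decomp)
  moreover have "(\<Sum>g<p. \<bar>\<theta> (g * Suc m)\<bar> + (\<Sum>u\<in>L g. \<bar>\<theta> u\<bar>)) \<ge> (\<Sum>g<p. X g)"
    using grp by (intro sum_mono) auto
  moreover have "(\<Sum>i<r. \<bar>\<theta> (p * Suc m + i)\<bar>) = real r" using iso by simp
  ultimately show ?thesis using Xsum unfolding N_def by simp
qed

definition th1 :: "nat \<Rightarrow> nat \<Rightarrow> nat \<Rightarrow> nat \<Rightarrow> real" where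
  "th1 p m r v = (if v < p * Suc m then
      (if v div Suc m = 0 then (if v mod Suc m = 0 then 1 else 0) else (if v mod Suc m = 0 then 0 else 1))
     else if v < p * Suc m + r then 1 else 0)"

lemma th1_hub: "g < p \<Longrightarrow> th1 p m r (g * Suc m) = (if g = 0 then 1 else 0)"
proof -
  assume g: "g < p"
  have "g * Suc m < p * Suc m" using g by (simp only: mult_less_cancel2) simp
  then show ?thesis by (simp add: th1_def hub_divmod del: mult_Suc_right)
qed

lemma th1_leaf: "g < p \<Longrightarrow> u \<in> {g * Suc m + 1..<g * Suc m + Suc m} \<Longrightarrow> th1 p m r u = (if g = 0 then 0 else 1)"
  using leaf_lt[of g p u m] leaf_divmod[of g m u] by (auto simp: th1_def)

lemma th1_iso: "i < r \<Longrightarrow> th1 p m r (p * Suc m + i) = 1"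
  by (simp add: th1_def)

lemma th1_stable: assumes p: "p \<ge> 1" shows "stable (p * Suc m + r) (GE p m) (th1 p m r)"
  unfolding stable_iff
proof (intro allI impI)
  fix v assume v: "v < p * Suc m + r"
  show "th1 p m r v = max 0 (1 - Yv (p * Suc m + r) (GE p m) v (th1 p m r))"
  proof (rule vcases[OF v])
    fix g assume g: "g < p" and vg: "v = g * Suc m"
    have "(\<Sum>g'\<in>{..<p}-{g}. th1 p m r (g' * Suc m)) = (\<Sum>g'\<in>{..<p}-{g}. if g' = 0 then 1 else 0)"
      by (intro sum.cong refl) (simp add: th1_hub del: mult_Suc_right)
    also have "\<dots> = (if g = 0 then 0 else 1)" using g p by (simp add: sum.delta)
    finally have s1: "(\<Sum>g'\<in>{..<p}-{g}. th1 p m r (g' * Suc m)) = (if g = 0 then 0 else 1)" .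
    have "(\<Sum>u\<in>{g * Suc m + 1..<g * Suc m + Suc m}. th1 p m r u) = (\<Sum>u\<in>{g * Suc m + 1..<g * Suc m + Suc m}. if g = 0 then 0 else 1)"
      by (intro sum.cong refl) (simp add: th1_leaf[OF g])
    also have "\<dots> = (if g = 0 then 0 else real m)" by simp
    finally have s2: "(\<Sum>u\<in>{g * Suc m + 1..<g * Suc m + Suc m}. th1 p m r u) = (if g = 0 then 0 else real m)" .
    show ?thesis using Yv_hub[OF g, of m r "th1 p m r"] s1 s2 th1_hub[OF g, of m r] vg by auto
  next
    fix g assume g: "g < p" and u: "v \<in> {g * Suc m + 1..<g * Suc m + Suc m}"
    show ?thesis using Yv_leaf[OF g u] th1_hub[OF g] th1_leaf[OF g u] by simp
  next
    fix i assume i: "i < r" and vi: "v = p * Suc m + i"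
    show ?thesis using Yv_iso[of p m r i] th1_iso[OF i] vi by simp
  qed
qed

lemma OPTs_GE:
  assumes m: "m \<ge> 2" and p: "p \<ge> 1"
  shows "real ((p - 1) * m + r) \<le> OPT_stable (p * Suc m + r) (GE p m)"
  unfolding OPT_stable_def
proof (rule cInf_greatest)
  show "{\<Sum>v<p * Suc m + r. \<bar>\<theta> v\<bar> |\<theta>. stable (p * Suc m + r) (GE p m) \<theta>} \<noteq> {}"
    using th1_stable[OF p] by blast
next
  fix x assume "x \<in> {\<Sum>v<p * Suc m + r. \<bar>\<theta> v\<bar> |\<theta>. stable (p * Suc m + r) (GE p m) \<theta>}"
  then show "real ((p - 1) * m + r) \<le> x" using stable_lower[OF m] by auto
qed

lemma cost_GE:
  assumes p2: "p \<ge> 2" and mp: "real m \<ge> 576 * real p"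
    and sch: "scheme (p * Suc m + r) Sig \<phi>" and pers: "persuasive (p * Suc m + r) (GE p m) Sig \<phi>"
  shows "real p * sqrt (real p * real m) / 24 \<le> cost (p * Suc m + r) \<phi>"
proof (rule cost_lb[OF sch pers, where \<alpha> = "al (sqrt (real p * real m))"])
  show "0 \<le> al (sqrt (real p * real m)) 0" by (simp add: al_def)
next
  fix s :: "nat \<Rightarrow> real" assume "\<forall>v<p * Suc m + r. 0 \<le> s v \<and> s v \<le> 1"
  then show "real p * sqrt (real p * real m) / 24 \<le> (\<Sum>v<p * Suc m + r. s v - al (sqrt (real p * real m)) (s v) * (s v + Yv (p * Suc m + r) (GE p m) v s - 1))"
    by (rule F_bound[OF p2 mp])
qed



lemma main_lemma:
  fixes n k :: nat
  assumes n: "n \<ge> 9216" and k2: "2 \<le> k" and kn: "k \<le> n"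
  shows "\<exists>N E. N \<le> n \<and> unit_graph N E \<and>
         1/2 * real k \<le> OPT N E \<and> OPT N E \<le> 2 * real k \<and>
         OPT_stable N E \<ge> 1/8 * real n \<and>
         (\<forall>Sig \<phi>. scheme N Sig \<phi> \<and> persuasive N E Sig \<phi> \<longrightarrow>
            cost N \<phi> \<ge> 1/4608 * min (real k * sqrt (real n)) (real n))"
proof -
  define sn where "sn = sqrt (real n)"
  have snsn: "sn * sn = real n" by (simp add: sn_def)
  have sn96: "sn \<ge> 96"
  proof -
    have "sqrt (96 * 96) \<le> sqrt (real n)" using n by (intro real_sqrt_le_mono) simp
    then show ?thesis by (simp add: sn_def)
  qed
  have snn: "sn \<le> real n"
  proof -
    have "sn * 1 \<le> sn * sn" using sn96 by (intro mult_left_mono) auto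
    then show ?thesis using snsn by simp
  qed
  define K where "K = nat \<lfloor>sn / 48\<rfloor>"
  have fl0: "\<lfloor>sn / 48\<rfloor> \<ge> 0" using sn96 by simp
  have Ke: "real K = real_of_int \<lfloor>sn / 48\<rfloor>" using fl0 by (simp add: K_def)
  have K1: "real K \<le> sn / 48" using Ke of_int_floor_le[of "sn / 48"] by linarith
  have K2: "real K > sn / 48 - 1" using Ke real_of_int_floor_gt_diff_one[of "sn / 48"] by linarith
  have Kge: "K \<ge> 2"
  proof -
    have "real K > 1" using K2 sn96 by simp
    then show ?thesis by simp
  qed
  define p where "p = min k K"
  have p2: "p \<ge> 2" using k2 Kge by (simp add: p_def)
  have pk: "p \<le> k" by (simp add: p_def)
  have psn: "real p \<le> sn / 48" using K1 by (simp add: p_def)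
  have pR: "real p > 0" using p2 by simp
  define q where "q = n div (2 * p)"
  have q1: "real q * (2 * real p) \<le> real n"
  proof -
    have "q * (2 * p) \<le> n" unfolding q_def by (rule div_times_less_eq_dividend)
    then have "real (q * (2 * p)) \<le> real n" by (simp only: of_nat_le_iff)
    then show ?thesis by simp
  qed
  have q2: "real n < (real q + 1) * (2 * real p)"
  proof -
    have e: "n = q * (2 * p) + n mod (2 * p)" unfolding q_def by (rule div_mult_mod_eq[symmetric])
    have l: "n mod (2 * p) < 2 * p" using p2 by simp
    have "real n = real q * (2 * real p) + real (n mod (2 * p))"
      using arg_cong[OF e, of real] by simp
    moreover have "real (n mod (2 * p)) < 2 * real p" using l by linarith
    ultimately show ?thesis by (simp add: algebra_simps)
  qed
  have pp: "real p * real p \<le> real n / 2304"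
  proof -
    have "real p * real p \<le> (sn / 48) * (sn / 48)" using psn pR by (intro mult_mono) auto
    then show ?thesis using snsn by simp
  qed
  have qbig: "real q \<ge> 577 * real p + 1"
  proof -
    have "(2 * real p) * (577 * real p + 2) = 1154 * (real p * real p) + 4 * real p" by (simp add: algebra_simps)
    also have "\<dots> \<le> 1154 * (real n / 2304) + 4 * (sn / 48)" using pp psn by linarith
    also have "\<dots> < real n" using snn sn96 by simp
    also have "\<dots> < (real q + 1) * (2 * real p)" by (rule q2)
    finally have "(577 * real p + 2) * (2 * real p) < (real q + 1) * (2 * real p)" by (simp add: mult.commute)
    then have "577 * real p + 2 < real q + 1" using pR by (simp only: mult_less_cancel_right)
    then show ?thesis by simp
  qed
  define m where "m = q - 1"
  have qpos: "q \<ge> 1" using qbig pR by (cases q) auto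
  have mq: "Suc m = q" using qpos by (simp add: m_def)
  have mR: "real m = real q - 1" using qpos by (simp add: m_def of_nat_diff)
  have mp: "real m \<ge> 576 * real p" using qbig mR by simp
  have m2: "m \<ge> 2"
  proof -
    have "real m \<ge> 2" using mp p2 by simp
    then show ?thesis by simp
  qed
  define r where "r = k div 2"
  define N where "N = p * Suc m + r"
  have Nn: "N \<le> n"
  proof -
    have "2 * (p * q) \<le> n" using div_times_less_eq_dividend[of n "2 * p"] by (simp add: q_def algebra_simps)
    moreover have "2 * r \<le> n" using kn by (simp add: r_def)
    ultimately show ?thesis by (simp add: N_def mq)
  qed
  have pm: "real p * real m \<ge> real n / 4"
  proof -
    have "real p * real m = real q * real p - real p" unfolding mR by (simp add: algebra_simps)
    moreover have "real q * real p \<ge> real n / 2 - real p" using q2 pR by (simp add: algebra_simps)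
    moreover have "real p \<le> real n / 8" using psn snn by simp
    ultimately show ?thesis by linarith
  qed
  have T: "sqrt (real p * real m) \<ge> sn / 2"
  proof -
    have "sqrt (real n / 4) \<le> sqrt (real p * real m)" using pm by (rule real_sqrt_le_mono)
    then show ?thesis by (simp add: sn_def real_sqrt_divide)
  qed
  show ?thesis
  proof (intro exI conjI allI impI)
    show "N \<le> n" by (rule Nn)
    show "unit_graph N (GE p m)" unfolding N_def by (rule unit_graph_GE)
    have opt: "OPT N (GE p m) = real (p + r)" unfolding N_def using m2 by (intro OPT_GE) simp
    have rk: "2 * real r \<ge> real k - 1" "real r \<le> real k / 2"
      unfolding r_def by linarith+
    show "1/2 * real k \<le> OPT N (GE p m)" using opt rk p2 by simp
    show "OPT N (GE p m) \<le> 2 * real k" using opt rk pk by simp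
    have st: "real ((p - 1) * m + r) \<le> OPT_stable N (GE p m)"
      unfolding N_def using m2 p2 by (intro OPTs_GE) auto
    have "real ((p - 1) * m + r) \<ge> real p * real m / 2"
    proof -
      have "real ((p - 1) * m + r) \<ge> real ((p - 1) * m)" by simp
      also have "real ((p - 1) * m) = (real p - 1) * real m" using p2 by (simp add: of_nat_diff)
      also have "(real p - 1) * real m \<ge> real p * real m / 2"
      proof -
        have "(real p - 1) * real m - real p * real m / 2 = (real p - 2) * real m / 2" by (simp add: algebra_simps)
        moreover have "(real p - 2) * real m \<ge> 0" using p2 by simp
        ultimately show ?thesis by linarith
      qed
      finally show ?thesis .
    qed
    then show "OPT_stable N (GE p m) \<ge> 1/8 * real n" using st pm by linarith
  next
    fix Sig \<phi> assume a: "scheme N Sig \<phi> \<and> persuasive N (GE p m) Sig \<phi>"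
    have c: "real p * sqrt (real p * real m) / 24 \<le> cost N \<phi>"
      using cost_GE[OF p2 mp, of r Sig \<phi>] a by (simp add: N_def)
    have c2: "real p * (sn / 2) / 24 \<le> real p * sqrt (real p * real m) / 24"
      using T pR by (simp add: divide_right_mono mult_left_mono)
    have goal: "1/4608 * min (real k * sn) (real n) \<le> real p * sn / 48"
    proof (cases "p = k")
      case True
      have "1/4608 * min (real k * sn) (real n) \<le> 1/4608 * (real k * sn)" by simp
      also have "\<dots> \<le> real p * sn / 48" using True sn96 by simp
      finally show ?thesis .
    next
      case False
      then have pK: "p = K" by (simp add: p_def min_def split: if_splits)
      have "real p \<ge> sn / 96" using K2 sn96 pK by simp
      then have "real p * sn \<ge> (sn / 96) * sn" using sn96 by (intro mult_right_mono) auto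
      then have "real p * sn / 48 \<ge> real n / 4608" using snsn by simp
      moreover have "1/4608 * min (real k * sn) (real n) \<le> real n / 4608" by simp
      ultimately show ?thesis by linarith
    qed
    show "1/4608 * min (real k * sqrt (real n)) (real n) \<le> cost N \<phi>"
      using c c2 goal by (simp add: sn_def)
  qed
qed


theorem theorem6p2:
  shows "\<exists>c1 c2 c3 c4 :: real. c1 > 0 \<and> c2 > 0 \<and> c3 > 0 \<and> c4 > 0 \<and>
    (\<exists>n0 :: nat. \<forall>n \<ge> n0. \<forall>k :: nat. 2 \<le> k \<and> k \<le> n \<longrightarrow>
      (\<exists>N E. N \<le> n \<and> unit_graph N E \<and>
         c1 * real k \<le> OPT N E \<and> OPT N E \<le> c2 * real k \<and>
         OPT_stable N E \<ge> c3 * real n \<and>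
         (\<forall>Sig \<phi>. scheme N Sig \<phi> \<and> persuasive N E Sig \<phi> \<longrightarrow>
            cost N \<phi> \<ge> c4 * min (real k * sqrt (real n)) (real n))))"
proof -
  have "\<forall>n \<ge> (9216::nat). \<forall>k :: nat. 2 \<le> k \<and> k \<le> n \<longrightarrow>
      (\<exists>N E. N \<le> n \<and> unit_graph N E \<and>
         1/2 * real k \<le> OPT N E \<and> OPT N E \<le> 2 * real k \<and>
         OPT_stable N E \<ge> 1/8 * real n \<and>
         (\<forall>Sig \<phi>. scheme N Sig \<phi> \<and> persuasive N E Sig \<phi> \<longrightarrow>
            cost N \<phi> \<ge> 1/4608 * min (real k * sqrt (real n)) (real n)))"
    using main_lemma by blast
  then show ?thesis
    by (intro exI[of _ "1/2"] exI[of _ "2"] exI[of _ "1/8"] exI[of _ "1/4608"] conjI exI[of _ "9216::nat"]) simp_all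
qed

end
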